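(* Let $\tilde w:\mathcal D^n(\delta)\to\mathcal D^n(\delta)$ and let $C\subset\mathcal D^n(\delta)$ be nonempty with $\tilde w(C)\subset C$. Let $\{\Lambda_\alpha\}_{\alpha\in\mathcal I}$ be the (possibly uncountable) family of all absorbing sets for $\tilde w$ in $C$. Then $\mathcal M:=\bigcap_{\alpha\in\mathcal I}\Lambda_\alpha$ is the set of all periodic points of $\tilde w$ in $C$, and hence $\mathcal M=\tilde w(\mathcal M)$.
   Context: $\mathcal D^n(\delta)=\{\delta m:m\in\mathbb Z^n\}\subset\mathbb R^n$ for fixed $\delta>0$. For a map $\tilde w$ and nonempty $C$ with $\tilde w(C)\subset C$, a set $\Lambda\subset C$ is an absorbing set for $\tilde w$ in $C$ if for every $\tilde x\in C$ there is $N\in\mathbb N$ with $\tilde w^{\circ i}(\tilde x)\in\Lambda$ for all $i\ge N$. A point $\tilde x$ is periodic if $\tilde w^{\circ k}(\tilde x)=\tilde x$ for some integer $k\ge1$. *)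

theory Defs
  imports "HOL-Analysis.Analysis"
begin

definition lattice :: "real \<Rightarrow> (real ^ 'n) set" where
  "lattice \<delta> = {x. \<forall>i. \<exists>m::int. x $ i = \<delta> * of_int m}"

text \<open>Absorbing set for w in C (C assumed forward invariant separately).\<close>
definition absorbing :: "('a \<Rightarrow> 'a) \<Rightarrow> 'a set \<Rightarrow> 'a set \<Rightarrow> bool" where
  "absorbing w C \<Lambda> \<longleftrightarrow> \<Lambda> \<subseteq> C \<and>
     (\<forall>x\<in>C. \<exists>N::nat. \<forall>i\<ge>N. (w ^^ i) x \<in> \<Lambda>)"

definition periodic_point :: "('a \<Rightarrow> 'a) \<Rightarrow> 'a \<Rightarrow> bool" where
  "periodic_point w x \<longleftrightarrow> (\<exists>k::nat. k \<ge> 1 \<and> (w ^^ k) x = x)"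

end

theory Submission
  imports Defs
begin

lemma orbit_in:
  assumes "w ` C \<subseteq> C" "x \<in> C" shows "(w ^^ i) x \<in> C"
  using assms by (induction i) auto

lemma per_mult:
  assumes "(w ^^ k) x = x" shows "(w ^^ (k * j)) x = x"
proof (induction j)
  case (Suc j)
  have "(w ^^ (k * Suc j)) x = (w ^^ k) ((w ^^ (k * j)) x)"
    by (simp add: funpow_add)
  then show ?case using Suc assms by simp
qed simp

lemma per_in_abs:
  assumes "absorbing w C L" "x \<in> C" "periodic_point w x"
  shows "x \<in> L"
proof -
  obtain k where k: "k \<ge> 1" "(w ^^ k) x = x" using assms(3) unfolding periodic_point_def by blast
  obtain N where N: "\<forall>i\<ge>N. (w ^^ i) x \<in> L" using assms(1,2) unfolding absorbing_def by blast
  have "k * N \<ge> N" using k by simp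
  then have "(w ^^ (k * N)) x \<in> L" using N by blast
  then show ?thesis using per_mult[OF k(2)] by simp
qed

lemma nonper_abs:
  assumes "w ` C \<subseteq> C" "\<not> periodic_point w x"
  shows "absorbing w C (C - {x})"
  unfolding absorbing_def
proof (intro conjI ballI)
  fix y assume y: "y \<in> C"
  show "\<exists>N. \<forall>i\<ge>N. (w ^^ i) y \<in> C - {x}"
  proof (cases "\<exists>n. (w ^^ n) y = x")
    case False
    then show ?thesis using orbit_in[OF assms(1) y] by blast
  next
    case True
    then obtain n where n: "(w ^^ n) y = x" by blast
    have "\<forall>i\<ge>Suc n. (w ^^ i) y \<in> C - {x}"
    proof (intro allI impI)
      fix i assume i: "Suc n \<le> i"
      obtain d where d: "i = Suc d + n" using i by (metis add.commute add_Suc le_Suc_ex)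
      have "(w ^^ i) y = (w ^^ Suc d) ((w ^^ n) y)" unfolding d funpow_add comp_apply ..
      then have "(w ^^ i) y = (w ^^ Suc d) x" using n by simp
      moreover have "(w ^^ Suc d) x \<noteq> x"
      proof
        assume h: "(w ^^ Suc d) x = x"
        have "periodic_point w x" unfolding periodic_point_def
          by (rule exI[of _ "Suc d"]) (simp only: h, simp)
        then show False using assms(2) by simp
      qed
      ultimately show "(w ^^ i) y \<in> C - {x}" using orbit_in[OF assms(1) y, of i] by auto
    qed
    then show ?thesis by blast
  qed
qed auto

lemma main_eq:
  assumes "w ` C \<subseteq> C"
  shows "\<Inter> {L. absorbing w C L} = {x \<in> C. periodic_point w x}"
proof
  show "\<Inter> {L. absorbing w C L} \<subseteq> {x \<in> C. periodic_point w x}"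
  proof
    fix x assume x: "x \<in> \<Inter> {L. absorbing w C L}"
    have "absorbing w C C" unfolding absorbing_def
    proof (intro conjI ballI)
      fix y assume "y \<in> C"
      then show "\<exists>N. \<forall>i\<ge>N. (w ^^ i) y \<in> C" using orbit_in[OF assms] by (intro exI[of _ 0]) simp
    qed simp
    then have xc: "x \<in> C" using x by (rule InterD[OF _ CollectI, rotated])
    show "x \<in> {x \<in> C. periodic_point w x}"
    proof (rule ccontr)
      assume "x \<notin> {x \<in> C. periodic_point w x}"
      then have "\<not> periodic_point w x" using xc by simp
      then have "absorbing w C (C - {x})" by (rule nonper_abs[OF assms])
      then have "x \<in> C - {x}" using x by (rule InterD[OF _ CollectI, rotated])
      then show False by simp
    qed
  qed
  show "{x \<in> C. periodic_point w x} \<subseteq> \<Inter> {L. absorbing w C L}"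
  proof
    fix x assume x: "x \<in> {x \<in> C. periodic_point w x}"
    show "x \<in> \<Inter> {L. absorbing w C L}"
    proof (rule InterI)
      fix L assume "L \<in> {L. absorbing w C L}"
      then have a: "absorbing w C L" by (rule CollectD)
      from x have xc: "x \<in> C" by simp
      from x have xp: "periodic_point w x" by simp
      show "x \<in> L" by (rule per_in_abs[OF a xc xp])
    qed
  qed
qed

lemma per_image:
  assumes "w ` C \<subseteq> C"
  shows "w ` {x \<in> C. periodic_point w x} = {x \<in> C. periodic_point w x}"
proof
  show "w ` {x \<in> C. periodic_point w x} \<subseteq> {x \<in> C. periodic_point w x}"
  proof
    fix y assume "y \<in> w ` {x \<in> C. periodic_point w x}"
    then obtain x where x: "x \<in> C" "periodic_point w x" "y = w x" by blast
    then obtain k where k: "k \<ge> 1" "(w ^^ k) x = x" unfolding periodic_point_def by blast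
    have "(w ^^ k) (w x) = w ((w ^^ k) x)" by (simp add: funpow_swap1)
    then have "(w ^^ k) y = y" using k x by simp
    then show "y \<in> {x \<in> C. periodic_point w x}"
      using k x assms unfolding periodic_point_def by blast
  qed
  show "{x \<in> C. periodic_point w x} \<subseteq> w ` {x \<in> C. periodic_point w x}"
  proof
    fix x assume x: "x \<in> {x \<in> C. periodic_point w x}"
    then obtain k where k: "k \<ge> 1" "(w ^^ k) x = x" unfolding periodic_point_def by blast
    define z where "z = (w ^^ (k - 1)) x"
    have kk: "k = Suc (k - 1)" using k by simp
    have "w z = (w ^^ Suc (k - 1)) x" unfolding z_def by simp
    then have wz: "w z = x" using k kk by metis
    have zc: "z \<in> C" unfolding z_def using orbit_in[OF assms] x by blast
    have "(w ^^ k) z = (w ^^ (k + (k - 1))) x" unfolding z_def by (simp add: funpow_add)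
    also have "\<dots> = (w ^^ ((k - 1) + k)) x" by (simp add: add.commute)
    also have "\<dots> = (w ^^ (k - 1)) ((w ^^ k) x)" by (simp add: funpow_add)
    finally have "(w ^^ k) z = (w ^^ (k - 1)) ((w ^^ k) x)" .
    then have "(w ^^ k) z = z" using k unfolding z_def by simp
    then have "periodic_point w z" using k unfolding periodic_point_def by blast
    then have "z \<in> {x \<in> C. periodic_point w x}" using zc by blast
    then show "x \<in> w ` {x \<in> C. periodic_point w x}" by (rule image_eqI[of x w z, OF wz[symmetric]])
  qed
qed

theorem theorem2:
  fixes w :: "real ^ 'n \<Rightarrow> real ^ 'n" and \<delta> :: real and C :: "(real ^ 'n) set"
  assumes "\<delta> > 0"
    and "w ` lattice \<delta> \<subseteq> lattice \<delta>"
    and "C \<subseteq> lattice \<delta>" and "C \<noteq> {}" and "w ` C \<subseteq> C"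
  shows "\<Inter> {\<Lambda>. absorbing w C \<Lambda>} = {x \<in> C. periodic_point w x}
     \<and> w ` (\<Inter> {\<Lambda>. absorbing w C \<Lambda>}) = \<Inter> {\<Lambda>. absorbing w C \<Lambda>}"
proof -
  have e: "\<Inter> {\<Lambda>. absorbing w C \<Lambda>} = {x \<in> C. periodic_point w x}" by (rule main_eq[OF assms(5)])
  show ?thesis unfolding e using per_image[OF assms(5)] by (rule conjI[OF refl])
qed

end
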